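(* Let $K$ be the cycle Kirchhoff–Symanzik matrix and ${*K}$ the cocycle Kirchhoff–Symanzik matrix. Then every eigenvalue of $K$ and of ${*K}$ is $\ge 1$. Moreover, for every $\lambda>1$, $\lambda$ is an eigenvalue of $K$ if and only if it is an eigenvalue of ${*K}$, with the same multiplicity. Consequently the multiplicities $m_K(1)$, $m_{*K}(1)$ of the eigenvalue $1$ satisfy $m_K(1)-m_{*K}(1)=(|E|-|V|+1)-(|V|-1)$; in particular if $|E|=2|V|-2$ then $K$ and ${*K}$ have the same spectrum with multiplicities and are similar.
   Context: Setup. Let $G=(V,E)$ be a finite connected graph with oriented edges (loops and multiple edges allowed), with edge space $\mathbb{R}^{E}$ carrying the Euclidean inner product $\langle\cdot,\cdot\rangle$, each edge identified with its standard basis vector. Fix a spanning tree $T\subseteq E$ of the underlying undirected graph. Edges in $T$ are cochords $e_\mu$, $\mu=1,\dots,|V|-1$; edges not in $T$ are chords $e_\alpha$, $\alpha=|V|,\dots,|E|$. For a chord $e_\alpha$, $T\cup\{e_\alpha\}$ contains a unique cycle; $c_\alpha\in\mathbb{R}^E$ has entry $+1$ (resp. $-1$) on each edge of this cycle whose orientation agrees (resp. disagrees) with traversal of the cycle in the direction of $e_\alpha$, and $0$ elsewhere. For a cochord $e_\mu$, $T\setminus\{e_\mu\}$ has two components; let $S_\mu$ be the vertex set of the component containing the tail of $e_\mu$; $c_\mu\in\mathbb{R}^E$ has entry $+1$ on edges with tail in $S_\mu$ and head not in $S_\mu$, $-1$ on edges with head in $S_\mu$ and tail not in $S_\mu$,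 and $0$ elsewhere. The cycle Kirchhoff–Symanzik (KS) matrix is the $(|E|-|V|+1)\times(|E|-|V|+1)$ Gram matrix $K=(\langle c_\alpha,c_{\alpha'}\rangle)_{\alpha,\alpha'}$; the cocycle KS matrix is the $(|V|-1)\times(|V|-1)$ Gram matrix ${*K}=(\langle c_\mu,c_{\mu'}\rangle)_{\mu,\mu'}$. *)

theory Defs
  imports "Jordan_Normal_Form.Char_Poly" "Jordan_Normal_Form.Matrix"
begin

definition graph :: "'v set \<Rightarrow> 'e set \<Rightarrow> ('e \<Rightarrow> 'v) \<Rightarrow> ('e \<Rightarrow> 'v) \<Rightarrow> bool" where
  "graph V E tail head \<longleftrightarrow> finite V \<and> V \<noteq> {} \<and> finite E \<and> (\<forall>e\<in>E. tail e \<in> V \<and> head e \<in> V)"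

definition adj :: "'e set \<Rightarrow> ('e \<Rightarrow> 'v) \<Rightarrow> ('e \<Rightarrow> 'v) \<Rightarrow> ('v \<times> 'v) set" where
  "adj F tail head = {(tail e, head e) | e. e \<in> F} \<union> {(head e, tail e) | e. e \<in> F}"

definition connected_on :: "'v set \<Rightarrow> 'e set \<Rightarrow> ('e \<Rightarrow> 'v) \<Rightarrow> ('e \<Rightarrow> 'v) \<Rightarrow> bool" where
  "connected_on V F tail head \<longleftrightarrow> (\<forall>u\<in>V. \<forall>v\<in>V. (u, v) \<in> (adj F tail head)\<^sup>*)"

definition spanning_tree :: "'v set \<Rightarrow> 'e set \<Rightarrow> ('e \<Rightarrow> 'v) \<Rightarrow> ('e \<Rightarrow> 'v) \<Rightarrow> 'e set \<Rightarrow> bool" where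
  "spanning_tree V E tail head T \<longleftrightarrow> T \<subseteq> E \<and> connected_on V T tail head
     \<and> (\<forall>e\<in>T. \<not> connected_on V (T - {e}) tail head)"

definition einner :: "'e set \<Rightarrow> ('e \<Rightarrow> real) \<Rightarrow> ('e \<Rightarrow> real) \<Rightarrow> real" where
  "einner E x y = (\<Sum>e\<in>E. x e * y e)"

definition boundary :: "'e set \<Rightarrow> ('e \<Rightarrow> 'v) \<Rightarrow> ('e \<Rightarrow> 'v) \<Rightarrow> ('e \<Rightarrow> real) \<Rightarrow> 'v \<Rightarrow> real" where
  "boundary E tail head x v = (\<Sum>e\<in>E. x e * ((if head e = v then 1 else 0) - (if tail e = v then 1 else 0)))"

text \<open>Fundamental cycle vector of a chord a: the signed indicator of the unique cycle in
  T \<union> {a}, signs given by traversal in the direction of a.\<close>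
definition cycle_vec :: "'e set \<Rightarrow> ('e \<Rightarrow> 'v) \<Rightarrow> ('e \<Rightarrow> 'v) \<Rightarrow> 'e set \<Rightarrow> 'e \<Rightarrow> ('e \<Rightarrow> real)" where
  "cycle_vec E tail head T a = (THE c. (\<forall>e. c e \<in> {-1, 0, 1}) \<and> (\<forall>e. e \<notin> T \<union> {a} \<longrightarrow> c e = 0)
      \<and> c a = 1 \<and> (\<forall>v. boundary E tail head c v = 0))"

definition cut_side :: "'v set \<Rightarrow> ('e \<Rightarrow> 'v) \<Rightarrow> ('e \<Rightarrow> 'v) \<Rightarrow> 'e set \<Rightarrow> 'e \<Rightarrow> 'v set" where
  "cut_side V tail head T m = {v \<in> V. (tail m, v) \<in> (adj (T - {m}) tail head)\<^sup>*}"

definition cocycle_vec :: "'v set \<Rightarrow> ('e \<Rightarrow> 'v) \<Rightarrow> ('e \<Rightarrow> 'v) \<Rightarrow> 'e set \<Rightarrow> 'e \<Rightarrow> ('e \<Rightarrow> real)" where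
  "cocycle_vec V tail head T m = (\<lambda>e. let S = cut_side V tail head T m in
      if tail e \<in> S \<and> head e \<notin> S then 1 else if head e \<in> S \<and> tail e \<notin> S then -1 else 0)"

definition cycle_KS :: "'e set \<Rightarrow> ('e \<Rightarrow> 'v) \<Rightarrow> ('e \<Rightarrow> 'v) \<Rightarrow> 'e set \<Rightarrow> 'e list \<Rightarrow> real mat" where
  "cycle_KS E tail head T cs = mat (length cs) (length cs)
     (\<lambda>(i, j). einner E (cycle_vec E tail head T (cs ! i)) (cycle_vec E tail head T (cs ! j)))"

definition cocycle_KS :: "'v set \<Rightarrow> 'e set \<Rightarrow> ('e \<Rightarrow> 'v) \<Rightarrow> ('e \<Rightarrow> 'v) \<Rightarrow> 'e set \<Rightarrow> 'e list \<Rightarrow> real mat" where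
  "cocycle_KS V E tail head T ds = mat (length ds) (length ds)
     (\<lambda>(i, j). einner E (cocycle_vec V tail head T (ds ! i)) (cocycle_vec V tail head T (ds ! j)))"

definition eig_mult :: "real mat \<Rightarrow> real \<Rightarrow> nat" where
  "eig_mult A k = order k (char_poly A)"

end

theory Submission imports Defs "Jordan_Normal_Form.Matrix_Kernel" begin


lemma kernel_basis_mat:
  fixes A :: "'a::field mat"
  assumes A: "A \<in> carrier_mat nr nc"
  shows "\<exists>k Z. Z \<in> carrier_mat nc k \<and> A * Z = 0\<^sub>m nr k
     \<and> (\<forall>v \<in> carrier_vec nc. A *\<^sub>v v = 0\<^sub>v nr \<longrightarrow> (\<exists>c \<in> carrier_vec k. v = Z *\<^sub>v c))
     \<and> (\<forall>c \<in> carrier_vec k. Z *\<^sub>v c = 0\<^sub>v nc \<longrightarrow> c = 0\<^sub>v k)"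
proof -
  interpret kernel nr nc A by (unfold_locales, rule A)
  obtain B where finB: "finite B" and bas: "basis B" using kernel_basis_exists[OF A] by blast
  obtain ws where ws: "set ws = B" "distinct ws" using finite_distinct_list[OF finB] by blast
  have Bk: "B \<subseteq> mat_kernel A" and li: "lin_indpt B" and sp: "span B = mat_kernel A"
    using bas unfolding Ker.basis_def by auto
  have Bc: "B \<subseteq> carrier_vec nc" using Bk mat_kernel_carrier[OF A] by auto
  define k where "k = length ws"
  define Z where "Z = mat_of_cols nc ws"
  have Z: "Z \<in> carrier_mat nc k" unfolding Z_def k_def by auto
  have dimws: "\<forall>w\<in>set ws. dim_vec w = nc" using Bc ws by auto
  have colZ: "col Z j = ws ! j" if j: "j < k" for j
  proof -
    have "ws ! j \<in> B" using ws j k_def nth_mem by blast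
    hence "ws ! j \<in> carrier_vec nc" using Bc by blast
    thus ?thesis unfolding Z_def using col_mat_of_cols[of j ws nc] j k_def by blast
  qed
  have AZ: "A * Z = 0\<^sub>m nr k"
  proof (rule eq_matI)
    fix i j assume i: "i < dim_row (0\<^sub>m nr k)" and j: "j < dim_col (0\<^sub>m nr k)"
    have "ws ! j \<in> mat_kernel A" using Bk ws j k_def by auto
    hence "A *\<^sub>v (ws ! j) = 0\<^sub>v nr" using mat_kernelD[OF A] by auto
    hence "(A *\<^sub>v (ws ! j)) $ i = 0" using i by auto
    thus "(A * Z) $$ (i, j) = 0\<^sub>m nr k $$ (i, j)" using i j A Z colZ[of j]
      by auto
  qed (use A Z in auto)
  have span_eq: "mat_kernel A = NC.span B" using sp span_same[OF Bk] by simp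
  have fs: "NC.span B = {NC.lincomb a B | a. a \<in> B \<rightarrow> UNIV}"
    using NC.finite_span[OF finB] Bc by auto
  have spanning: "\<forall>v \<in> carrier_vec nc. A *\<^sub>v v = 0\<^sub>v nr \<longrightarrow> (\<exists>c \<in> carrier_vec k. v = Z *\<^sub>v c)"
  proof (intro ballI impI)
    fix v assume v: "v \<in> carrier_vec nc" "A *\<^sub>v v = 0\<^sub>v nr"
    hence "v \<in> mat_kernel A" using mat_kernelI[OF A] by auto
    then obtain a where va: "v = NC.lincomb a B" using span_eq fs by auto
    also have "\<dots> = NC.lincomb_list (\<lambda>i. a (ws ! i)) ws"
      using NC.lincomb_as_lincomb_list_distinct[of ws a] ws Bc by auto
    also have "\<dots> = Z *\<^sub>v vec k (\<lambda>i. a (ws ! i))"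
      unfolding Z_def k_def by (rule NC.lincomb_list_as_mat_mult[OF dimws])
    finally show "\<exists>c \<in> carrier_vec k. v = Z *\<^sub>v c" by auto
  qed
  have indep: "\<forall>c \<in> carrier_vec k. Z *\<^sub>v c = 0\<^sub>v nc \<longrightarrow> c = 0\<^sub>v k"
  proof (intro ballI impI)
    fix c :: "'a vec" assume c: "c \<in> carrier_vec k" and z: "Z *\<^sub>v c = 0\<^sub>v nc"
    define a where "a = (\<lambda>w::'a vec. c $ (the_inv_into {..<k} ((!) ws) w))"
    have inj: "inj_on ((!) ws) {..<k}" using ws(2) unfolding k_def by (intro inj_on_nth, auto)
    have idx: "the_inv_into {..<k} ((!) ws) (ws ! i) = i" if "i < k" for i
      using the_inv_into_f_f[OF inj] that by auto
    have "NC.lincomb a B = NC.lincomb_list (\<lambda>i. a (ws ! i)) ws"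
      using NC.lincomb_as_lincomb_list_distinct[of ws a] ws Bc by auto
    also have "\<dots> = Z *\<^sub>v vec k (\<lambda>i. a (ws ! i))"
      unfolding Z_def k_def by (rule NC.lincomb_list_as_mat_mult[OF dimws])
    also have "vec k (\<lambda>i. a (ws ! i)) = c"
      using c idx unfolding a_def by auto
    finally have lc: "NC.lincomb a B = 0\<^sub>v nc" using z by simp
    have li2: "\<not> NC.lin_dep B" using li lindep_same[OF Bk] by simp
    have "a \<in> B \<rightarrow> {0}" using NC.not_lindepD[OF li2 finB subset_refl _ lc] by auto
    thus "c = 0\<^sub>v k"
    proof -
      have "\<And>i. i < k \<Longrightarrow> c $ i = 0"
      proof -
        fix i assume i: "i < k"
        have "ws ! i \<in> B" using ws i k_def by auto
        hence "a (ws ! i) = 0" using \<open>a \<in> B \<rightarrow> {0}\<close> by auto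
        thus "c $ i = 0" using idx[OF i] unfolding a_def by simp
      qed
      thus ?thesis using c by (intro eq_vecI, auto)
    qed
  qed
  show ?thesis using Z AZ spanning indep by blast
qed


lemma scalar_transpose:
  fixes A :: "'a::comm_semiring_0 mat"
  assumes A: "A \<in> carrier_mat nr nc" and x: "x \<in> carrier_vec nc" and y: "y \<in> carrier_vec nr"
  shows "y \<bullet> (A *\<^sub>v x) = (A\<^sup>T *\<^sub>v y) \<bullet> x"
proof -
  have "y \<bullet> (A *\<^sub>v x) = (\<Sum>i<nr. y $ i * (\<Sum>j<nc. A $$ (i,j) * x $ j))"
    using A x y by (auto simp: scalar_prod_def mult_mat_vec_def row_def lessThan_atLeast0)
  also have "\<dots> = (\<Sum>i<nr. \<Sum>j<nc. y $ i * A $$ (i,j) * x $ j)"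
    by (simp add: sum_distrib_left mult.assoc)
  also have "\<dots> = (\<Sum>j<nc. \<Sum>i<nr. y $ i * A $$ (i,j) * x $ j)"
    by (rule sum.swap)
  also have "\<dots> = (\<Sum>j<nc. (\<Sum>i<nr. A $$ (i,j) * y $ i) * x $ j)"
    unfolding sum_distrib_right by (intro sum.cong refl) (simp add: mult_ac)
  also have "\<dots> = (A\<^sup>T *\<^sub>v y) \<bullet> x"
    using A x y by (auto simp: scalar_prod_def mult_mat_vec_def row_def col_def lessThan_atLeast0)
  finally show ?thesis .
qed

lemma self_scalar_nonneg:
  fixes v :: "real vec"
  shows "v \<bullet> v \<ge> 0"
  unfolding scalar_prod_def by (auto intro: sum_nonneg)

lemma self_scalar_zero:
  fixes v :: "real vec"
  assumes v: "v \<in> carrier_vec n" and z: "v \<bullet> v = 0"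
  shows "v = 0\<^sub>v n"
proof -
  have "(\<Sum>i\<in>{0..<dim_vec v}. v $ i * v $ i) = 0" using z unfolding scalar_prod_def by simp
  hence "\<forall>i\<in>{0..<dim_vec v}. v $ i * v $ i = 0"
    by (subst sum_nonneg_eq_0_iff[symmetric], auto)
  thus ?thesis using v by (intro eq_vecI, auto)
qed

lemma sim_aux:
  fixes A :: "real mat"
  assumes A: "A \<in> carrier_mat n n"
    and Z: "Z \<in> carrier_mat n k" and AZ: "A * Z = 0\<^sub>m n k"
    and Zsp: "\<forall>v \<in> carrier_vec n. A *\<^sub>v v = 0\<^sub>v n \<longrightarrow> (\<exists>c \<in> carrier_vec k. v = Z *\<^sub>v c)"
    and W: "W \<in> carrier_mat n l" and AW: "A\<^sup>T * W = 0\<^sub>m n l"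
    and Wi: "\<forall>c \<in> carrier_vec l. W *\<^sub>v c = 0\<^sub>v n \<longrightarrow> c = 0\<^sub>v l"
    and kl: "k \<le> l"
  shows "similar_mat (A\<^sup>T * A) (A * A\<^sup>T)"
proof -
  define Em :: "real mat" where "Em = mat l k (\<lambda>(i,j). if i = j then 1 else 0)"
  have Em: "Em \<in> carrier_mat l k" unfolding Em_def by auto
  define Phi where "Phi = W * Em * Z\<^sup>T"
  have Phi: "Phi \<in> carrier_mat n n" unfolding Phi_def using W Em Z by auto
  have At: "A\<^sup>T \<in> carrier_mat n n" using A by auto
  have Zt: "Z\<^sup>T \<in> carrier_mat k n" using Z by auto
  define X where "X = A\<^sup>T * A"
  define Y where "Y = A * A\<^sup>T"
  have X: "X \<in> carrier_mat n n" unfolding X_def using A by auto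
  have Y: "Y \<in> carrier_mat n n" unfolding Y_def using A by auto
  have ZtAt: "Z\<^sup>T * A\<^sup>T = 0\<^sub>m k n"
    using arg_cong[OF AZ, of transpose_mat] transpose_mult[OF A Z] by simp
  have WE: "W * Em \<in> carrier_mat n k" using W Em by auto
  have PhiAt: "Phi * A\<^sup>T = 0\<^sub>m n n"
  proof -
    have "Phi * A\<^sup>T = (W * Em) * (Z\<^sup>T * A\<^sup>T)" unfolding Phi_def
      by (rule assoc_mult_mat[OF WE Zt At])
    also have "\<dots> = 0\<^sub>m n n" unfolding ZtAt by (rule right_mult_zero_mat[OF WE])
    finally show ?thesis .
  qed
  have AtPhi: "A\<^sup>T * Phi = 0\<^sub>m n n"
  proof -
    have "A\<^sup>T * Phi = (A\<^sup>T * (W * Em)) * Z\<^sup>T" unfolding Phi_def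
      by (rule assoc_mult_mat[OF At WE Zt, symmetric])
    also have "A\<^sup>T * (W * Em) = (A\<^sup>T * W) * Em" by (rule assoc_mult_mat[OF At W Em, symmetric])
    also have "\<dots> = 0\<^sub>m n k" unfolding AW using Em by simp
    also have "0\<^sub>m n k * Z\<^sup>T = 0\<^sub>m n n" using Zt by simp
    finally show ?thesis .
  qed
  define Tm where "Tm = A + Phi"
  have Tm: "Tm \<in> carrier_mat n n" unfolding Tm_def using A Phi by auto
  have AX: "A * X \<in> carrier_mat n n" using A X by auto
  have TX: "Tm * X = A * X"
  proof -
    have "Tm * X = A * X + Phi * X" unfolding Tm_def by (rule add_mult_distrib_mat[OF A Phi X])
    also have "Phi * X = (Phi * A\<^sup>T) * A" unfolding X_def by (rule assoc_mult_mat[OF Phi At A, symmetric])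
    also have "\<dots> = 0\<^sub>m n n" unfolding PhiAt using A by simp
    finally show ?thesis using AX by simp
  qed
  have YT: "Y * Tm = A * X"
  proof -
    have "Y * Tm = Y * A + Y * Phi" unfolding Tm_def by (rule mult_add_distrib_mat[OF Y A Phi])
    also have "Y * Phi = A * (A\<^sup>T * Phi)" unfolding Y_def by (rule assoc_mult_mat[OF A At Phi])
    also have "\<dots> = 0\<^sub>m n n" unfolding AtPhi using A by simp
    also have "Y * A = A * X" unfolding X_def Y_def by (rule assoc_mult_mat[OF A At A])
    finally show ?thesis using AX by simp
  qed
  have inj: "x = 0\<^sub>v n" if x: "x \<in> carrier_vec n" and Tx: "Tm *\<^sub>v x = 0\<^sub>v n" for x
  proof -
    have "A\<^sup>T *\<^sub>v (Tm *\<^sub>v x) = (A\<^sup>T * Tm) *\<^sub>v x" using assoc_mult_mat_vec[OF At Tm x] by simp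
    also have "A\<^sup>T * Tm = X + A\<^sup>T * Phi" unfolding Tm_def X_def by (rule mult_add_distrib_mat[OF At A Phi])
    also have "\<dots> = X" unfolding AtPhi using X by simp
    moreover have "A\<^sup>T *\<^sub>v 0\<^sub>v n = 0\<^sub>v n" using At by (intro eq_vecI, auto)
    ultimately have Xx: "X *\<^sub>v x = 0\<^sub>v n" using Tx by simp
    have Ax_c: "A *\<^sub>v x \<in> carrier_vec n" using A x by auto
    have "(A *\<^sub>v x) \<bullet> (A *\<^sub>v x) = (A\<^sup>T *\<^sub>v (A *\<^sub>v x)) \<bullet> x"
      using scalar_transpose[OF A x Ax_c] .
    also have "A\<^sup>T *\<^sub>v (A *\<^sub>v x) = X *\<^sub>v x" unfolding X_def using assoc_mult_mat_vec[OF At A x] by simp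
    finally have "(A *\<^sub>v x) \<bullet> (A *\<^sub>v x) = 0" using Xx x by simp
    hence Ax: "A *\<^sub>v x = 0\<^sub>v n" using self_scalar_zero[OF Ax_c] by simp
    have "Phi *\<^sub>v x = 0\<^sub>v n"
    proof -
      have "Tm *\<^sub>v x = A *\<^sub>v x + Phi *\<^sub>v x" unfolding Tm_def by (rule add_mult_distrib_mat_vec[OF A Phi x])
      thus ?thesis using Tx Ax Phi x by simp
    qed
    moreover have "Phi *\<^sub>v x = W *\<^sub>v (Em *\<^sub>v (Z\<^sup>T *\<^sub>v x))" unfolding Phi_def
      using assoc_mult_mat_vec[OF WE Zt x] assoc_mult_mat_vec[OF W Em, of "Z\<^sup>T *\<^sub>v x"] Zt x by simp
    ultimately have "W *\<^sub>v (Em *\<^sub>v (Z\<^sup>T *\<^sub>v x)) = 0\<^sub>v n" by simp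
    hence E0: "Em *\<^sub>v (Z\<^sup>T *\<^sub>v x) = 0\<^sub>v l" using Wi Em Zt x by auto
    have Ztx: "Z\<^sup>T *\<^sub>v x = 0\<^sub>v k"
    proof (rule eq_vecI)
      fix i assume "i < dim_vec (0\<^sub>v k)"
      hence i: "i < k" by simp
      have "(Em *\<^sub>v (Z\<^sup>T *\<^sub>v x)) $ i = (Z\<^sup>T *\<^sub>v x) $ i"
      proof -
        have "(Em *\<^sub>v (Z\<^sup>T *\<^sub>v x)) $ i = (\<Sum>j<k. Em $$ (i,j) * (Z\<^sup>T *\<^sub>v x) $ j)"
          using i kl Em Zt x by (auto simp: mult_mat_vec_def scalar_prod_def lessThan_atLeast0)
        also have "\<dots> = (\<Sum>j<k. if j = i then (Z\<^sup>T *\<^sub>v x) $ j else 0)"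
          using i kl by (intro sum.cong, auto simp: Em_def)
        also have "\<dots> = (Z\<^sup>T *\<^sub>v x) $ i" using i by simp
        finally show ?thesis .
      qed
      thus "(Z\<^sup>T *\<^sub>v x) $ i = 0\<^sub>v k $ i" using E0 i kl by simp
    qed (use Zt in auto)
    obtain c where c: "c \<in> carrier_vec k" and xc: "x = Z *\<^sub>v c" using Zsp x Ax by blast
    have "x \<bullet> x = x \<bullet> (Z *\<^sub>v c)" using xc by simp
    also have "\<dots> = (Z\<^sup>T *\<^sub>v x) \<bullet> c" using scalar_transpose[OF Z c x] .
    also have "\<dots> = 0" unfolding Ztx using c by simp
    finally show ?thesis using self_scalar_zero[OF x] by simp
  qed
  have "det Tm \<noteq> 0" using det_0_iff_vec_prod_zero[OF Tm] inj by auto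
  from det_non_zero_imp_unit[OF Tm this, unfolded Units_def, of "()"]
  obtain S where S: "S \<in> carrier_mat n n" and ST: "S * Tm = 1\<^sub>m n" and TS: "Tm * S = 1\<^sub>m n"
    by (auto simp: ring_mat_def)
  have "S * Y * Tm = S * (Y * Tm)" by (rule assoc_mult_mat[OF S Y Tm])
  also have "\<dots> = S * (Tm * X)" unfolding YT TX ..
  also have "\<dots> = (S * Tm) * X" by (rule assoc_mult_mat[OF S Tm X, symmetric])
  also have "\<dots> = X" unfolding ST using X by simp
  finally have "X = S * Y * Tm" by simp
  hence "similar_mat_wit X Y S Tm" unfolding similar_mat_wit_def Let_def
    using X Y S Tm ST TS by auto
  thus ?thesis unfolding similar_mat_def X_def Y_def by blast
qed

lemma sim_ATA_AAT:
  fixes A :: "real mat"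
  assumes A: "A \<in> carrier_mat n n"
  shows "similar_mat (A\<^sup>T * A) (A * A\<^sup>T)"
proof -
  have At: "A\<^sup>T \<in> carrier_mat n n" using A by auto
  obtain k Z where Z: "Z \<in> carrier_mat n k" "A * Z = 0\<^sub>m n k"
     "\<forall>v \<in> carrier_vec n. A *\<^sub>v v = 0\<^sub>v n \<longrightarrow> (\<exists>c \<in> carrier_vec k. v = Z *\<^sub>v c)"
     "\<forall>c \<in> carrier_vec k. Z *\<^sub>v c = 0\<^sub>v n \<longrightarrow> c = 0\<^sub>v k"
    using kernel_basis_mat[OF A] by blast
  obtain l W where W: "W \<in> carrier_mat n l" "A\<^sup>T * W = 0\<^sub>m n l"
     "\<forall>v \<in> carrier_vec n. A\<^sup>T *\<^sub>v v = 0\<^sub>v n \<longrightarrow> (\<exists>c \<in> carrier_vec l. v = W *\<^sub>v c)"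
     "\<forall>c \<in> carrier_vec l. W *\<^sub>v c = 0\<^sub>v n \<longrightarrow> c = 0\<^sub>v l"
    using kernel_basis_mat[OF At] by blast
  show ?thesis
  proof (cases "k \<le> l")
    case True
    show ?thesis by (rule sim_aux[OF A Z(1,2,3) W(1,2,4) True])
  next
    case False
    have "similar_mat (A\<^sup>T\<^sup>T * A\<^sup>T) (A\<^sup>T * A\<^sup>T\<^sup>T)"
      by (rule sim_aux[OF At W(1) _ _ Z(1) _ Z(4)], insert W Z False, auto)
    thus ?thesis using similar_mat_sym by simp
  qed
qed


lemma sylvester_poly_pt:
  fixes A :: "real mat"
  assumes A: "A \<in> carrier_mat m n"
  shows "y ^ m * det (y \<cdot>\<^sub>m 1\<^sub>m n - A\<^sup>T * A) = y ^ n * det (y \<cdot>\<^sub>m 1\<^sub>m m - A * A\<^sup>T)"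
proof -
  have At: "A\<^sup>T \<in> carrier_mat n m" using A by auto
  define M where "M = four_block_mat (1\<^sub>m m) A (A\<^sup>T) (y \<cdot>\<^sub>m 1\<^sub>m n)"
  have M: "M \<in> carrier_mat (m+n) (m+n)" unfolding M_def using A At by auto
  define L1 where "L1 = four_block_mat (1\<^sub>m m) (0\<^sub>m m n) (- A\<^sup>T) (1\<^sub>m n)"
  have L1: "L1 \<in> carrier_mat (m+n) (m+n)" unfolding L1_def using At by auto
  define L2 where "L2 = four_block_mat (y \<cdot>\<^sub>m 1\<^sub>m m) (- A) (0\<^sub>m n m) (1\<^sub>m n)"
  have L2: "L2 \<in> carrier_mat (m+n) (m+n)" unfolding L2_def using A by auto
  have ATA: "A\<^sup>T * A \<in> carrier_mat n n" using A At by auto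
  have AAT: "A * A\<^sup>T \<in> carrier_mat m m" using A At by auto
  have L1M: "L1 * M = four_block_mat (1\<^sub>m m) A (0\<^sub>m n m) (y \<cdot>\<^sub>m 1\<^sub>m n - A\<^sup>T * A)"
  proof -
    have "L1 * M = four_block_mat (1\<^sub>m m * 1\<^sub>m m + 0\<^sub>m m n * A\<^sup>T) (1\<^sub>m m * A + 0\<^sub>m m n * (y \<cdot>\<^sub>m 1\<^sub>m n))
      (- A\<^sup>T * 1\<^sub>m m + 1\<^sub>m n * A\<^sup>T) (- A\<^sup>T * A + 1\<^sub>m n * (y \<cdot>\<^sub>m 1\<^sub>m n))"
      unfolding L1_def M_def by (rule mult_four_block_mat, insert A At, auto)
    also have "\<dots> = four_block_mat (1\<^sub>m m) A (0\<^sub>m n m) (y \<cdot>\<^sub>m 1\<^sub>m n - A\<^sup>T * A)"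
    proof (rule cong_four_block_mat)
      show "1\<^sub>m m * 1\<^sub>m m + 0\<^sub>m m n * A\<^sup>T = 1\<^sub>m m" using At by simp
      show "1\<^sub>m m * A + 0\<^sub>m m n * (y \<cdot>\<^sub>m 1\<^sub>m n) = A" using A by simp
      show "- A\<^sup>T * 1\<^sub>m m + 1\<^sub>m n * A\<^sup>T = 0\<^sub>m n m" using At by (intro eq_matI, auto)
      show "- A\<^sup>T * A + 1\<^sub>m n * (y \<cdot>\<^sub>m 1\<^sub>m n) = y \<cdot>\<^sub>m 1\<^sub>m n - A\<^sup>T * A"
        using At A ATA by (intro eq_matI, auto)
    qed
    finally show ?thesis .
  qed
  have L2M: "L2 * M = four_block_mat (y \<cdot>\<^sub>m 1\<^sub>m m - A * A\<^sup>T) (0\<^sub>m m n) A\<^sup>T (y \<cdot>\<^sub>m 1\<^sub>m n)"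
  proof -
    have "L2 * M = four_block_mat (y \<cdot>\<^sub>m 1\<^sub>m m * 1\<^sub>m m + - A * A\<^sup>T) (y \<cdot>\<^sub>m 1\<^sub>m m * A + - A * (y \<cdot>\<^sub>m 1\<^sub>m n))
      (0\<^sub>m n m * 1\<^sub>m m + 1\<^sub>m n * A\<^sup>T) (0\<^sub>m n m * A + 1\<^sub>m n * (y \<cdot>\<^sub>m 1\<^sub>m n))"
      unfolding L2_def M_def by (rule mult_four_block_mat, insert A At, auto)
    also have "\<dots> = four_block_mat (y \<cdot>\<^sub>m 1\<^sub>m m - A * A\<^sup>T) (0\<^sub>m m n) A\<^sup>T (y \<cdot>\<^sub>m 1\<^sub>m n)"
    proof (rule cong_four_block_mat)
      show "y \<cdot>\<^sub>m 1\<^sub>m m * 1\<^sub>m m + - A * A\<^sup>T = y \<cdot>\<^sub>m 1\<^sub>m m - A * A\<^sup>T"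
        using A At AAT by (intro eq_matI, auto)
      show "y \<cdot>\<^sub>m 1\<^sub>m m * A + - A * (y \<cdot>\<^sub>m 1\<^sub>m n) = 0\<^sub>m m n" using A by (intro eq_matI, auto)
      show "0\<^sub>m n m * 1\<^sub>m m + 1\<^sub>m n * A\<^sup>T = A\<^sup>T" using At by simp
      show "0\<^sub>m n m * A + 1\<^sub>m n * (y \<cdot>\<^sub>m 1\<^sub>m n) = y \<cdot>\<^sub>m 1\<^sub>m n" using A by simp
    qed
    finally show ?thesis .
  qed
  have dL1: "det L1 = 1" unfolding L1_def
    by (subst det_four_block_mat_upper_right_zero[of _ m _ n], insert At, auto)
  have dL2: "det L2 = y ^ m" unfolding L2_def
    by (subst det_four_block_mat_lower_left_zero[of _ m _ n], insert A, auto)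
  have "det M = det (L1 * M)" using det_mult[OF L1 M] dL1 by simp
  also have "\<dots> = det (y \<cdot>\<^sub>m 1\<^sub>m n - A\<^sup>T * A)" unfolding L1M
    by (subst det_four_block_mat_lower_left_zero[of _ m _ n], insert A ATA, auto)
  finally have e1: "det M = det (y \<cdot>\<^sub>m 1\<^sub>m n - A\<^sup>T * A)" .
  have "y ^ m * det M = det (L2 * M)" using det_mult[OF L2 M] dL2 by simp
  also have "\<dots> = det (y \<cdot>\<^sub>m 1\<^sub>m m - A * A\<^sup>T) * y ^ n" unfolding L2M
    by (subst det_four_block_mat_upper_right_zero[of _ m _ n], insert At AAT, auto)
  finally show ?thesis using e1 by (simp add: mult.commute)
qed


lemma eig_ge1:
  fixes B :: "real mat"
  assumes B: "B \<in> carrier_mat p q" and ev: "eigenvalue (1\<^sub>m q + B\<^sup>T * B) k"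
  shows "k \<ge> 1"
proof -
  have Bt: "B\<^sup>T \<in> carrier_mat q p" using B by auto
  obtain v where v: "v \<in> carrier_vec q" "v \<noteq> 0\<^sub>v q" and Kv: "(1\<^sub>m q + B\<^sup>T * B) *\<^sub>v v = k \<cdot>\<^sub>v v"
    using ev B unfolding eigenvalue_def eigenvector_def by auto
  have Bv: "B *\<^sub>v v \<in> carrier_vec p" using B v by auto
  have "(1\<^sub>m q + B\<^sup>T * B) *\<^sub>v v = v + B\<^sup>T *\<^sub>v (B *\<^sub>v v)"
    using add_mult_distrib_mat_vec[of "1\<^sub>m q" q q "B\<^sup>T * B" v] assoc_mult_mat_vec[OF Bt B v(1)] B Bt v
    by auto
  hence "v \<bullet> (k \<cdot>\<^sub>v v) = v \<bullet> (v + B\<^sup>T *\<^sub>v (B *\<^sub>v v))" using Kv by simp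
  also have "\<dots> = v \<bullet> v + v \<bullet> (B\<^sup>T *\<^sub>v (B *\<^sub>v v))"
    using v Bt Bv by (simp add: scalar_prod_add_distrib[of _ q])
  also have "v \<bullet> (B\<^sup>T *\<^sub>v (B *\<^sub>v v)) = (B *\<^sub>v v) \<bullet> (B *\<^sub>v v)"
    using scalar_transpose[OF Bt Bv v(1)] by simp
  finally have eq: "k * (v \<bullet> v) = v \<bullet> v + (B *\<^sub>v v) \<bullet> (B *\<^sub>v v)" using v by simp
  have pos: "v \<bullet> v > 0" using self_scalar_nonneg[of v] self_scalar_zero[OF v(1)] v(2)
    by fastforce
  have "(B *\<^sub>v v) \<bullet> (B *\<^sub>v v) \<ge> 0" by (rule self_scalar_nonneg)
  hence "k * (v \<bullet> v) \<ge> 1 * (v \<bullet> v)" using eq by simp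
  thus ?thesis using pos by (simp add: mult_le_cancel_right)
qed

lemma char_poly_1_plus:
  fixes B :: "real mat"
  assumes B: "B \<in> carrier_mat n n"
  shows "poly (char_poly (1\<^sub>m n + B)) x = det ((x - 1) \<cdot>\<^sub>m 1\<^sub>m n - B)"
proof -
  have C: "1\<^sub>m n + B \<in> carrier_mat n n" using B by auto
  have "- char_matrix (1\<^sub>m n + B) x = (x - 1) \<cdot>\<^sub>m 1\<^sub>m n - B"
    using B by (intro eq_matI, auto simp: char_matrix_def)
  thus ?thesis using char_poly_matrix[OF C] by simp
qed

lemma KS_poly:
  fixes A :: "real mat"
  assumes A: "A \<in> carrier_mat m n"
  shows "[:-1,1:] ^ m * char_poly (1\<^sub>m n + A\<^sup>T * A) = [:-1,1:] ^ n * char_poly (1\<^sub>m m + A * A\<^sup>T)"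
proof (rule poly_eq_poly_eq_iff[THEN iffD1], rule ext)
  fix x :: real
  have ATA: "A\<^sup>T * A \<in> carrier_mat n n" using A by auto
  have AAT: "A * A\<^sup>T \<in> carrier_mat m m" using A by auto
  show "poly ([:-1,1:] ^ m * char_poly (1\<^sub>m n + A\<^sup>T * A)) x = poly ([:-1,1:] ^ n * char_poly (1\<^sub>m m + A * A\<^sup>T)) x"
    using sylvester_poly_pt[OF A, of "x - 1"] char_poly_1_plus[OF ATA, of x] char_poly_1_plus[OF AAT, of x]
    by simp
qed

lemma order_facts:
  fixes P Q :: "real poly"
  assumes P: "P \<noteq> 0" and Q: "Q \<noteq> 0" and eq: "[:-1,1:] ^ m * P = [:-1,1:] ^ n * Q"
  shows "\<And>k. k \<noteq> 1 \<Longrightarrow> (poly P k = 0 \<longleftrightarrow> poly Q k = 0) \<and> Polynomial.order k P = Polynomial.order k Q"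
    and "int (Polynomial.order 1 P) - int (Polynomial.order 1 Q) = int n - int m"
proof -
  have nz: "[:-1,1:] ^ j \<noteq> (0 :: real poly)" for j by simp
  have o1: "Polynomial.order 1 ([:-1,1::real:] ^ j) = j" for j using order_power_n_n[of 1 j] by simp
  have ok: "Polynomial.order k ([:-1,1::real:] ^ j) = 0" if "k \<noteq> 1" for k j
    using that by (simp add: order_0I)
  have L: "[:-1,1:] ^ m * P \<noteq> 0" using P nz by simp
  have R: "[:-1,1:] ^ n * Q \<noteq> 0" using Q nz by simp
  have ord: "Polynomial.order k ([:-1,1:] ^ m * P) = Polynomial.order k ([:-1,1:] ^ n * Q)" for k using eq by simp
  {
    fix k :: real assume k: "k \<noteq> 1"
    have "Polynomial.order k P = Polynomial.order k Q" using ord[of k] order_mult[OF L] order_mult[OF R] ok[OF k] by simp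
    moreover have "poly P k = 0 \<longleftrightarrow> poly Q k = 0"
    proof -
      have "poly ([:-1,1:] ^ m * P) k = poly ([:-1,1:] ^ n * Q) k" using eq by simp
      hence "(k - 1) ^ m * poly P k = (k - 1) ^ n * poly Q k" by simp
      thus ?thesis using k by auto
    qed
    ultimately show "(poly P k = 0 \<longleftrightarrow> poly Q k = 0) \<and> Polynomial.order k P = Polynomial.order k Q" by simp
  }
  have "m + Polynomial.order 1 P = n + Polynomial.order 1 Q" using ord[of 1] order_mult[OF L] order_mult[OF R] o1 by simp
  thus "int (Polynomial.order 1 P) - int (Polynomial.order 1 Q) = int n - int m" by simp
qed


lemma similar_1_plus:
  fixes X Y :: "real mat"
  assumes sim: "similar_mat X Y" and X: "X \<in> carrier_mat n n"
  shows "similar_mat (1\<^sub>m n + X) (1\<^sub>m n + Y)"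
proof -
  obtain P Q where wit: "similar_mat_wit X Y P Q" using sim unfolding similar_mat_def by auto
  have n: "n = dim_row X" using X by auto
  note w = similar_mat_witD[OF n wit]
  have "P * (1\<^sub>m n + Y) = P * 1\<^sub>m n + P * Y"
    by (rule mult_add_distrib_mat[of P n n], insert w, auto)
  hence "P * (1\<^sub>m n + Y) * Q = (P + P * Y) * Q" using w by simp
  also have "\<dots> = P * Q + P * Y * Q" using w by (simp add: add_mult_distrib_mat)
  also have "\<dots> = 1\<^sub>m n + X" using w by simp
  finally have "1\<^sub>m n + X = P * (1\<^sub>m n + Y) * Q" by simp
  hence "similar_mat_wit (1\<^sub>m n + X) (1\<^sub>m n + Y) P Q"
    unfolding similar_mat_wit_def Let_def using w by auto
  thus ?thesis unfolding similar_mat_def by blast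
qed

lemma matrix_main:
  fixes A :: "real mat"
  assumes A: "A \<in> carrier_mat m n"
  defines "K \<equiv> 1\<^sub>m n + A\<^sup>T * A" and "sK \<equiv> 1\<^sub>m m + A * A\<^sup>T"
  shows "(\<forall>k. eigenvalue K k \<longrightarrow> k \<ge> 1)
    \<and> (\<forall>k. eigenvalue sK k \<longrightarrow> k \<ge> 1)
    \<and> (\<forall>k > 1. (eigenvalue K k \<longleftrightarrow> eigenvalue sK k) \<and> eig_mult K k = eig_mult sK k)
    \<and> int (eig_mult K 1) - int (eig_mult sK 1) = int n - int m
    \<and> (n = m \<longrightarrow> char_poly K = char_poly sK \<and> similar_mat K sK)"
proof -
  have At: "A\<^sup>T \<in> carrier_mat n m" using A by auto
  have Kc: "K \<in> carrier_mat n n" unfolding K_def using A by auto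
  have sKc: "sK \<in> carrier_mat m m" unfolding sK_def using A by auto
  have e1: "\<forall>k. eigenvalue K k \<longrightarrow> k \<ge> 1" unfolding K_def using eig_ge1[OF A] by blast
  have e2: "\<forall>k. eigenvalue sK k \<longrightarrow> k \<ge> 1" unfolding sK_def using eig_ge1[OF At] by simp
  have P0: "char_poly K \<noteq> 0" using degree_monic_char_poly[OF Kc] by auto
  have Q0: "char_poly sK \<noteq> 0" using degree_monic_char_poly[OF sKc] by auto
  have eq: "[:-1,1:] ^ m * char_poly K = [:-1,1:] ^ n * char_poly sK"
    unfolding K_def sK_def by (rule KS_poly[OF A])
  note of = order_facts[OF P0 Q0 eq]
  have e3: "\<forall>k > 1. (eigenvalue K k \<longleftrightarrow> eigenvalue sK k) \<and> eig_mult K k = eig_mult sK k"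
    using of(1) eigenvalue_root_char_poly[OF Kc] eigenvalue_root_char_poly[OF sKc]
    unfolding eig_mult_def by auto
  have e4: "int (eig_mult K 1) - int (eig_mult sK 1) = int n - int m"
    using of(2) unfolding eig_mult_def by simp
  have e5: "n = m \<longrightarrow> char_poly K = char_poly sK \<and> similar_mat K sK"
  proof
    assume nm: "n = m"
    have "char_poly K = char_poly sK" using eq nm by simp
    moreover have "similar_mat K sK"
    proof -
      have A': "A \<in> carrier_mat n n" using A nm by simp
      have "similar_mat (A\<^sup>T * A) (A * A\<^sup>T)" by (rule sim_ATA_AAT[OF A'])
      from similar_1_plus[OF this] show ?thesis unfolding K_def sK_def using A' nm by auto
    qed
    ultimately show "char_poly K = char_poly sK \<and> similar_mat K sK" by simp
  qed
  show ?thesis using e1 e2 e3 e4 e5 by blast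
qed




locale tree_ctx =
  fixes V :: "'v set" and E :: "'e set" and tail head :: "'e \<Rightarrow> 'v" and T :: "'e set"
  assumes G: "graph V E tail head" and ST: "spanning_tree V E tail head T"
begin

definition "S \<mu> = cut_side V tail head T \<mu>"
definition "s \<mu> v = (if v \<in> S \<mu> then 1 else 0 :: real)"
definition "dd e v = ((if head e = v then 1 else 0) - (if tail e = v then 1 else 0) :: real)"

lemma finV: "finite V" and finE: "finite E" and TE: "T \<subseteq> E" and finT: "finite T"
  and endsE: "e \<in> E \<Longrightarrow> tail e \<in> V \<and> head e \<in> V"
  using G ST unfolding graph_def spanning_tree_def by (auto intro: finite_subset)

lemma endsT: "e \<in> T \<Longrightarrow> tail e \<in> V \<and> head e \<in> V" using endsE TE by auto

lemma connT: "connected_on V T tail head" using ST unfolding spanning_tree_def by auto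

lemma minT: "e \<in> T \<Longrightarrow> \<not> connected_on V (T - {e}) tail head"
  using ST unfolding spanning_tree_def by auto

lemma adj_sym: "(u, v) \<in> (adj F tail head)\<^sup>* \<Longrightarrow> (v, u) \<in> (adj F tail head)\<^sup>*"
proof -
  have "sym (adj F tail head)" unfolding adj_def sym_def by auto
  hence "sym ((adj F tail head)\<^sup>*)" by (rule sym_rtrancl)
  thus "(u, v) \<in> (adj F tail head)\<^sup>* \<Longrightarrow> (v, u) \<in> (adj F tail head)\<^sup>*" by (rule symD)
qed

lemma S_sub: "S \<mu> \<subseteq> V" unfolding S_def cut_side_def by auto

lemma finS: "finite (S \<mu>)" using S_sub finV by (rule finite_subset)

lemma tail_in: "\<mu> \<in> T \<Longrightarrow> tail \<mu> \<in> S \<mu>"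
  unfolding S_def cut_side_def using endsT by auto

lemma same_side:
  assumes mu: "\<mu> \<in> T" and e: "e \<in> T" and ne: "e \<noteq> \<mu>"
  shows "tail e \<in> S \<mu> \<longleftrightarrow> head e \<in> S \<mu>"
proof -
  let ?R = "adj (T - {\<mu>}) tail head"
  have a1: "(tail e, head e) \<in> ?R" and a2: "(head e, tail e) \<in> ?R"
    unfolding adj_def using e ne by auto
  show ?thesis
  proof
    assume "tail e \<in> S \<mu>"
    hence "(tail \<mu>, tail e) \<in> ?R\<^sup>*" unfolding S_def cut_side_def by auto
    hence "(tail \<mu>, head e) \<in> ?R\<^sup>*" using a1 by (rule rtrancl_into_rtrancl)
    thus "head e \<in> S \<mu>" unfolding S_def cut_side_def using endsT[OF e] by auto
  next
    assume "head e \<in> S \<mu>"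
    hence "(tail \<mu>, head e) \<in> ?R\<^sup>*" unfolding S_def cut_side_def by auto
    hence "(tail \<mu>, tail e) \<in> ?R\<^sup>*" using a2 by (rule rtrancl_into_rtrancl)
    thus "tail e \<in> S \<mu>" unfolding S_def cut_side_def using endsT[OF e] by auto
  qed
qed

lemma head_notin:
  assumes mu: "\<mu> \<in> T"
  shows "head \<mu> \<notin> S \<mu>"
proof
  assume "head \<mu> \<in> S \<mu>"
  let ?R = "adj (T - {\<mu>}) tail head"
  have th: "(tail \<mu>, head \<mu>) \<in> ?R\<^sup>*" using \<open>head \<mu> \<in> S \<mu>\<close> unfolding S_def cut_side_def by auto
  have sub: "adj T tail head \<subseteq> ?R\<^sup>*"
  proof
    fix p assume "p \<in> adj T tail head"
    then obtain e where e: "e \<in> T" and p: "p = (tail e, head e) \<or> p = (head e, tail e)"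
      unfolding adj_def by auto
    show "p \<in> ?R\<^sup>*"
    proof (cases "e = \<mu>")
      case True
      thus ?thesis using p th adj_sym[OF th] by auto
    next
      case False
      hence "p \<in> ?R" using p e unfolding adj_def by auto
      thus ?thesis by auto
    qed
  qed
  have "(adj T tail head)\<^sup>* \<subseteq> ?R\<^sup>*"
    using rtrancl_mono[OF sub] by simp
  hence "connected_on V (T - {\<mu>}) tail head" using connT unfolding connected_on_def by auto
  thus False using minT[OF mu] by simp
qed

lemma s_tail: "\<mu> \<in> T \<Longrightarrow> s \<mu> (tail \<mu>) = 1" unfolding s_def using tail_in by auto
lemma s_head: "\<mu> \<in> T \<Longrightarrow> s \<mu> (head \<mu>) = 0" unfolding s_def using head_notin by auto
lemma s_same: "\<mu> \<in> T \<Longrightarrow> e \<in> T \<Longrightarrow> e \<noteq> \<mu> \<Longrightarrow> s \<mu> (tail e) = s \<mu> (head e)"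
  unfolding s_def using same_side by auto

definition "Gf u v = (\<Sum>\<mu>\<in>T. s \<mu> u * dd \<mu> v)"
definition "H u v = Gf u v + (if u = v then 1 else 0)"

lemma H_step:
  assumes nu: "\<nu> \<in> T"
  shows "H (tail \<nu>) v = H (head \<nu>) v"
proof -
  have "Gf (tail \<nu>) v - Gf (head \<nu>) v = (\<Sum>\<mu>\<in>T. (s \<mu> (tail \<nu>) - s \<mu> (head \<nu>)) * dd \<mu> v)"
    unfolding Gf_def by (simp add: sum_subtractf left_diff_distrib)
  also have "\<dots> = (\<Sum>\<mu>\<in>T. if \<mu> = \<nu> then dd \<nu> v else 0)"
  proof (rule sum.cong[OF refl])
    fix \<mu> assume mu: "\<mu> \<in> T"
    show "(s \<mu> (tail \<nu>) - s \<mu> (head \<nu>)) * dd \<mu> v = (if \<mu> = \<nu> then dd \<nu> v else 0)"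
      using s_tail[OF nu] s_head[OF nu] s_same[OF mu nu] by auto
  qed
  also have "\<dots> = dd \<nu> v" using nu finT by simp
  finally show ?thesis unfolding H_def dd_def by simp
qed

lemma H_path: "(u, w) \<in> (adj T tail head)\<^sup>* \<Longrightarrow> H u v = H w v"
proof (induction rule: rtrancl_induct)
  case base
  then show ?case by simp
next
  case (step y z)
  from step(2) obtain e where e: "e \<in> T" and p: "(y, z) = (tail e, head e) \<or> (y, z) = (head e, tail e)"
    unfolding adj_def by auto
  have "H y v = H z v" using p H_step[OF e, of v] by auto
  thus ?case using step(3) by simp
qed

lemma H_const: "u \<in> V \<Longrightarrow> w \<in> V \<Longrightarrow> H u v = H w v"
  using connT H_path unfolding connected_on_def by blast

definition "c0 a e = (if e = a then 1 else if e \<in> T then s e (head a) - s e (tail a) else 0)"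

lemma boundary_c0:
  assumes a: "a \<in> E" "a \<notin> T"
  shows "boundary E tail head (c0 a) v = 0"
proof -
  have pt: "c0 a e * dd e v = (if e = a then dd a v else 0) + (if e \<in> T then (s e (head a) - s e (tail a)) * dd e v else 0)" for e
    unfolding c0_def using a by auto
  have "boundary E tail head (c0 a) v = (\<Sum>e\<in>E. c0 a e * dd e v)"
    unfolding boundary_def dd_def by simp
  also have "\<dots> = (\<Sum>e\<in>E. if e = a then dd a v else 0) + (\<Sum>e\<in>E. if e \<in> T then (s e (head a) - s e (tail a)) * dd e v else 0)"
    unfolding sum.cong[OF refl pt] by (rule sum.distrib)
  also have "(\<Sum>e\<in>E. if e = a then dd a v else 0) = dd a v" using a finE by simp
  also have "(\<Sum>e\<in>E. if e \<in> T then (s e (head a) - s e (tail a)) * dd e v else 0)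
      = (\<Sum>e\<in>T. (s e (head a) - s e (tail a)) * dd e v)"
    using sum.inter_restrict[OF finE, of "\<lambda>e. (s e (head a) - s e (tail a)) * dd e v" T] TE
    by (simp add: Int_absorb1)
  also have "\<dots> = Gf (head a) v - Gf (tail a) v"
    unfolding Gf_def by (simp add: sum_subtractf left_diff_distrib)
  also have "dd a v + (Gf (head a) v - Gf (tail a) v) = H (head a) v - H (tail a) v"
    unfolding H_def dd_def by simp
  also have "\<dots> = 0" using H_const[of "head a" "tail a" v] endsE[OF a(1)] by simp
  finally show ?thesis .
qed

lemma sum_S_boundary:
  "(\<Sum>v\<in>S \<mu>. boundary E tail head x v) = (\<Sum>e\<in>E. x e * (s \<mu> (head e) - s \<mu> (tail e)))"
proof -
  have "(\<Sum>v\<in>S \<mu>. boundary E tail head x v) = (\<Sum>v\<in>S \<mu>. \<Sum>e\<in>E. x e * dd e v)"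
    unfolding boundary_def dd_def by simp
  also have "\<dots> = (\<Sum>e\<in>E. \<Sum>v\<in>S \<mu>. x e * dd e v)" by (rule sum.swap)
  also have "\<dots> = (\<Sum>e\<in>E. x e * (\<Sum>v\<in>S \<mu>. dd e v))" by (simp add: sum_distrib_left)
  also have "\<dots> = (\<Sum>e\<in>E. x e * (s \<mu> (head e) - s \<mu> (tail e)))"
  proof (rule sum.cong[OF refl])
    fix e
    have "(\<Sum>v\<in>S \<mu>. dd e v) = (\<Sum>v\<in>S \<mu>. if head e = v then 1 else 0) - (\<Sum>v\<in>S \<mu>. if tail e = v then 1 else 0)"
      unfolding dd_def by (simp add: sum_subtractf)
    also have "\<dots> = s \<mu> (head e) - s \<mu> (tail e)" unfolding s_def using finS[of \<mu>] by simp
    finally show "x e * (\<Sum>v\<in>S \<mu>. dd e v) = x e * (s \<mu> (head e) - s \<mu> (tail e))" by simp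
  qed
  finally show ?thesis .
qed

lemma unique0:
  assumes sup: "\<And>e. e \<notin> T \<Longrightarrow> x e = 0" and bd: "\<And>v. boundary E tail head x v = 0"
    and mu: "\<mu> \<in> T"
  shows "x \<mu> = 0"
proof -
  have "0 = (\<Sum>v\<in>S \<mu>. boundary E tail head x v)" using bd by simp
  also have "\<dots> = (\<Sum>e\<in>E. x e * (s \<mu> (head e) - s \<mu> (tail e)))" by (rule sum_S_boundary)
  also have "\<dots> = (\<Sum>e\<in>E. if e = \<mu> then - x \<mu> else 0)"
  proof (rule sum.cong[OF refl])
    fix e assume e: "e \<in> E"
    show "x e * (s \<mu> (head e) - s \<mu> (tail e)) = (if e = \<mu> then - x \<mu> else 0)"
      using sup[of e] s_tail[OF mu] s_head[OF mu] s_same[OF mu, of e] by (cases "e \<in> T", auto)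
  qed
  also have "\<dots> = - x \<mu>" using mu TE finE by auto
  finally show ?thesis by simp
qed

lemma c0_vals: "c0 a e \<in> {-1, 0, 1}"
  unfolding c0_def s_def by auto

lemma cycle_vec_eq:
  assumes a: "a \<in> E" "a \<notin> T"
  shows "cycle_vec E tail head T a = c0 a"
  unfolding cycle_vec_def
proof (rule the_equality)
  show "(\<forall>e. c0 a e \<in> {-1, 0, 1}) \<and> (\<forall>e. e \<notin> T \<union> {a} \<longrightarrow> c0 a e = 0) \<and> c0 a a = 1
      \<and> (\<forall>v. boundary E tail head (c0 a) v = 0)"
    using c0_vals boundary_c0[OF a] by (auto simp: c0_def)
next
  fix c assume c: "(\<forall>e. c e \<in> {-1, 0, 1}) \<and> (\<forall>e. e \<notin> T \<union> {a} \<longrightarrow> c e = 0) \<and> c a = 1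
      \<and> (\<forall>v. boundary E tail head c v = 0)"
  define x where "x e = c e - c0 a e" for e
  have sup: "x e = 0" if "e \<notin> T" for e using c that unfolding x_def c0_def by auto
  have bd: "boundary E tail head x v = 0" for v
  proof -
    have "boundary E tail head x v = boundary E tail head c v - boundary E tail head (c0 a) v"
      unfolding boundary_def x_def by (simp add: sum_subtractf left_diff_distrib)
    thus ?thesis using c boundary_c0[OF a] by simp
  qed
  show "c = c0 a"
  proof
    fix e show "c e = c0 a e"
      using sup[of e] unique0[OF sup bd, of e] unfolding x_def by (cases "e \<in> T", auto)
  qed
qed

lemma cocycle_eq: "cocycle_vec V tail head T \<mu> e = s \<mu> (tail e) - s \<mu> (head e)"
  unfolding cocycle_vec_def s_def S_def Let_def by auto

lemma card_T: "card T = card V - 1"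
proof -
  obtain r where r: "r \<in> V" using G unfolding graph_def by auto
  define f where "f \<mu> w = (s \<mu> r - s \<mu> w) * dd \<mu> w" for \<mu> w
  have a: "(\<Sum>w\<in>V. f \<mu> w) = 1" if mu: "\<mu> \<in> T" for \<mu>
  proof -
    have pt: "f \<mu> w = (if head \<mu> = w then s \<mu> r - s \<mu> (head \<mu>) else 0) - (if tail \<mu> = w then s \<mu> r - s \<mu> (tail \<mu>) else 0)" for w
      unfolding f_def dd_def by auto
    have "(\<Sum>w\<in>V. f \<mu> w) = (s \<mu> r - s \<mu> (head \<mu>)) - (s \<mu> r - s \<mu> (tail \<mu>))"
      unfolding pt using endsT[OF mu] finV by (simp add: sum_subtractf)
    thus ?thesis using s_tail[OF mu] s_head[OF mu] by simp
  qed
  have b: "(\<Sum>\<mu>\<in>T. f \<mu> w) = (if w = r then 0 else 1)" if w: "w \<in> V" for w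
  proof -
    have "(\<Sum>\<mu>\<in>T. f \<mu> w) = Gf r w - Gf w w" unfolding f_def Gf_def
      by (simp add: sum_subtractf left_diff_distrib)
    also have "\<dots> = (if w = r then 0 else 1)" using H_const[OF r w, of w] unfolding H_def by auto
    finally show ?thesis .
  qed
  have "real (card T) = (\<Sum>\<mu>\<in>T. \<Sum>w\<in>V. f \<mu> w)" using a by simp
  also have "\<dots> = (\<Sum>w\<in>V. \<Sum>\<mu>\<in>T. f \<mu> w)" by (rule sum.swap)
  also have "\<dots> = (\<Sum>w\<in>V. if w = r then 0 else 1)" using b by simp
  also have "\<dots> = real (card (V \<inter> - {r}))"
    using finV r by (simp add: sum.If_cases)
  also have "V \<inter> - {r} = V - {r}" by auto
  also have "real (card (V - {r})) = real (card V - 1)" using r finV by simp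
  finally show ?thesis by simp
qed

lemma K_entry:
  assumes a: "a \<in> E" "a \<notin> T" and a': "a' \<in> E" "a' \<notin> T"
  shows "(\<Sum>e\<in>E. c0 a e * c0 a' e) = (if a = a' then 1 else 0) + (\<Sum>\<mu>\<in>T. c0 a \<mu> * c0 a' \<mu>)"
proof -
  have pt: "c0 a e * c0 a' e = (if e = a then (if a = a' then 1 else 0) else 0) + (if e \<in> T then c0 a e * c0 a' e else 0)" for e
  proof (cases "e \<in> T")
    case True
    hence "e \<noteq> a" "e \<noteq> a'" using a a' by auto
    thus ?thesis using True by simp
  next
    case False
    hence "c0 a e = (if e = a then 1 else 0)" "c0 a' e = (if e = a' then 1 else 0)"
      unfolding c0_def by auto
    thus ?thesis using False by auto
  qed
  have "(\<Sum>e\<in>E. c0 a e * c0 a' e) = (\<Sum>e\<in>E. if e = a then (if a = a' then 1 else 0) else 0) + (\<Sum>e\<in>E. if e \<in> T then c0 a e * c0 a' e else 0)"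
    unfolding sum.cong[OF refl pt] by (rule sum.distrib)
  also have "(\<Sum>e\<in>E. if e = a then (if a = a' then 1 else 0) else 0) = (if a = a' then 1 else 0)"
    using a finE by simp
  also have "(\<Sum>e\<in>E. if e \<in> T then c0 a e * c0 a' e else 0) = (\<Sum>\<mu>\<in>T. c0 a \<mu> * c0 a' \<mu>)"
    using sum.inter_restrict[OF finE, of "\<lambda>e. c0 a e * c0 a' e" T] TE by (simp add: Int_absorb1)
  finally show ?thesis .
qed

lemma cocycle_T: "\<mu> \<in> T \<Longrightarrow> e \<in> T \<Longrightarrow> cocycle_vec V tail head T \<mu> e = (if e = \<mu> then 1 else 0)"
  unfolding cocycle_eq using s_tail s_head s_same by auto

lemma cocycle_chord: "\<mu> \<in> T \<Longrightarrow> e \<notin> T \<Longrightarrow> cocycle_vec V tail head T \<mu> e = - c0 e \<mu>"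
  unfolding cocycle_eq c0_def by auto

lemma sK_entry:
  assumes mu: "\<mu> \<in> T" and mu': "\<mu>' \<in> T"
  shows "(\<Sum>e\<in>E. cocycle_vec V tail head T \<mu> e * cocycle_vec V tail head T \<mu>' e)
     = (if \<mu> = \<mu>' then 1 else 0) + (\<Sum>a\<in>E - T. c0 a \<mu> * c0 a \<mu>')"
proof -
  let ?k = "cocycle_vec V tail head T"
  define h where "h e = (if e = \<mu> then (if \<mu> = \<mu>' then 1 else 0) else (0::real))" for e
  define g where "g e = c0 e \<mu> * c0 e \<mu>'" for e
  have pt: "?k \<mu> e * ?k \<mu>' e = (if e \<in> T then h e else g e)" for e
  proof (cases "e \<in> T")
    case True
    show ?thesis unfolding cocycle_T[OF mu True] cocycle_T[OF mu' True] h_def using True by simp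
  next
    case False
    show ?thesis unfolding cocycle_chord[OF mu False] cocycle_chord[OF mu' False] g_def using False by simp
  qed
  have "(\<Sum>e\<in>E. ?k \<mu> e * ?k \<mu>' e) = (\<Sum>e\<in>E. if e \<in> T then h e else g e)"
    by (rule sum.cong[OF refl pt])
  also have "\<dots> = sum h (E \<inter> T) + sum g (E \<inter> - T)"
    using sum.If_cases[OF finE, of "\<lambda>x. x \<in> T" h g] unfolding Collect_mem_eq .
  finally have eq1: "(\<Sum>e\<in>E. ?k \<mu> e * ?k \<mu>' e) = sum h (E \<inter> T) + sum g (E \<inter> - T)" .
  have e1: "E \<inter> T = T" using TE by auto
  have e2: "E \<inter> - T = E - T" by auto
  have e3: "sum h T = (if \<mu> = \<mu>' then 1 else 0)" unfolding h_def
    by (subst sum.delta[OF finT]) (use mu in simp)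
  have e4: "sum g (E - T) = (\<Sum>a\<in>E - T. c0 a \<mu> * c0 a \<mu>')" unfolding g_def ..
  show ?thesis unfolding eq1 e1 e2 e3 e4 ..
qed

end




lemma sum_set_nth:
  assumes "distinct xs"
  shows "(\<Sum>x\<in>set xs. f x) = (\<Sum>i<length xs. f (xs ! i))"
proof -
  have inj: "inj_on ((!) xs) {..<length xs}" using assms by (intro inj_on_nth, auto)
  have "set xs = (!) xs ` {..<length xs}" by (auto simp: in_set_conv_nth)
  thus ?thesis using sum.reindex[OF inj, of f] by simp
qed

theorem theorem5:
  fixes V :: "'v set" and E :: "'e set" and tail head :: "'e \<Rightarrow> 'v"
    and T :: "'e set" and cs ds :: "'e list"
  assumes G: "graph V E tail head"
    and conn: "connected_on V E tail head"
    and ST: "spanning_tree V E tail head T"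
    and cs: "distinct cs" "set cs = E - T"
    and ds: "distinct ds" "set ds = T"
  defines "K \<equiv> cycle_KS E tail head T cs"
    and "sK \<equiv> cocycle_KS V E tail head T ds"
  shows "(\<forall>k. eigenvalue K k \<longrightarrow> k \<ge> 1)
    \<and> (\<forall>k. eigenvalue sK k \<longrightarrow> k \<ge> 1)
    \<and> (\<forall>k > 1. (eigenvalue K k \<longleftrightarrow> eigenvalue sK k) \<and> eig_mult K k = eig_mult sK k)
    \<and> int (eig_mult K 1) - int (eig_mult sK 1)
        = (int (card E) - int (card V) + 1) - (int (card V) - 1)
    \<and> (card E = 2 * card V - 2 \<longrightarrow> char_poly K = char_poly sK \<and> similar_mat K sK)"
proof -
  interpret tc: tree_ctx V E tail head T using G ST by unfold_locales
  define m where "m = length ds"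
  define n where "n = length cs"
  define A :: "real mat" where "A = mat m n (\<lambda>(i,j). tc.c0 (cs ! j) (ds ! i))"
  have A: "A \<in> carrier_mat m n" unfolding A_def by auto
  have chord: "cs ! j \<in> E \<and> cs ! j \<notin> T" if "j < n" for j
    using cs(2) nth_mem[of j cs] that unfolding n_def by auto
  have tree: "ds ! i \<in> T" if "i < m" for i
    using ds(2) nth_mem[of i ds] that unfolding m_def by auto
  have Keq: "K = 1\<^sub>m n + A\<^sup>T * A"
  proof (rule eq_matI)
    show "dim_row K = dim_row (1\<^sub>m n + A\<^sup>T * A)" unfolding K_def cycle_KS_def using A n_def by simp
    show "dim_col K = dim_col (1\<^sub>m n + A\<^sup>T * A)" unfolding K_def cycle_KS_def using A n_def by simp
    fix j j' assume "j < dim_row (1\<^sub>m n + A\<^sup>T * A)" "j' < dim_col (1\<^sub>m n + A\<^sup>T * A)"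
    hence j: "j < n" and j': "j' < n" using A by auto
    have "K $$ (j, j') = (\<Sum>e\<in>E. tc.c0 (cs ! j) e * tc.c0 (cs ! j') e)"
      unfolding K_def cycle_KS_def einner_def using j j' chord[OF j] chord[OF j']
        tc.cycle_vec_eq n_def by auto
    also have "\<dots> = (if cs ! j = cs ! j' then 1 else 0) + (\<Sum>\<mu>\<in>T. tc.c0 (cs ! j) \<mu> * tc.c0 (cs ! j') \<mu>)"
      using tc.K_entry chord[OF j] chord[OF j'] by blast
    also have "(\<Sum>\<mu>\<in>T. tc.c0 (cs ! j) \<mu> * tc.c0 (cs ! j') \<mu>) = (\<Sum>i<m. A $$ (i,j) * A $$ (i,j'))"
      unfolding ds(2)[symmetric] sum_set_nth[OF ds(1)] m_def[symmetric] A_def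
      using j j' by (intro sum.cong, auto)
    also have "(if cs ! j = cs ! j' then 1 else 0) = (if j = j' then 1 else (0::real))"
      using nth_eq_iff_index_eq[OF cs(1)] j j' n_def by auto
    also have "(if j = j' then 1 else 0) + (\<Sum>i<m. A $$ (i,j) * A $$ (i,j')) = (1\<^sub>m n + A\<^sup>T * A) $$ (j, j')"
      using j j' A by (auto simp: scalar_prod_def lessThan_atLeast0)
    finally show "K $$ (j, j') = (1\<^sub>m n + A\<^sup>T * A) $$ (j, j')" .
  qed
  have sKeq: "sK = 1\<^sub>m m + A * A\<^sup>T"
  proof (rule eq_matI)
    show "dim_row sK = dim_row (1\<^sub>m m + A * A\<^sup>T)" unfolding sK_def cocycle_KS_def using A m_def by simp
    show "dim_col sK = dim_col (1\<^sub>m m + A * A\<^sup>T)" unfolding sK_def cocycle_KS_def using A m_def by simp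
    fix i i' assume "i < dim_row (1\<^sub>m m + A * A\<^sup>T)" "i' < dim_col (1\<^sub>m m + A * A\<^sup>T)"
    hence i: "i < m" and i': "i' < m" using A by auto
    have "sK $$ (i, i') = (\<Sum>e\<in>E. cocycle_vec V tail head T (ds ! i) e * cocycle_vec V tail head T (ds ! i') e)"
      unfolding sK_def cocycle_KS_def einner_def using i i' m_def by auto
    also have "\<dots> = (if ds ! i = ds ! i' then 1 else 0) + (\<Sum>a\<in>E - T. tc.c0 a (ds ! i) * tc.c0 a (ds ! i'))"
      using tc.sK_entry tree[OF i] tree[OF i'] by blast
    also have "(\<Sum>a\<in>E - T. tc.c0 a (ds ! i) * tc.c0 a (ds ! i')) = (\<Sum>j<n. A $$ (i,j) * A $$ (i',j))"
      unfolding cs(2)[symmetric] sum_set_nth[OF cs(1)] n_def[symmetric] A_def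
      using i i' by (intro sum.cong, auto)
    also have "(if ds ! i = ds ! i' then 1 else 0) = (if i = i' then 1 else (0::real))"
      using nth_eq_iff_index_eq[OF ds(1)] i i' m_def by auto
    also have "(if i = i' then 1 else 0) + (\<Sum>j<n. A $$ (i,j) * A $$ (i',j)) = (1\<^sub>m m + A * A\<^sup>T) $$ (i, i')"
      using i i' A by (auto simp: scalar_prod_def lessThan_atLeast0)
    finally show "sK $$ (i, i') = (1\<^sub>m m + A * A\<^sup>T) $$ (i, i')" .
  qed
  have cT: "card T = card V - 1" by (rule tc.card_T)
  have V1: "card V \<ge> 1" using G unfolding graph_def by (auto simp: Suc_le_eq card_gt_0_iff)
  have mT: "m = card T" unfolding m_def using distinct_card[OF ds(1)] ds(2) by simp
  have nT: "n = card E - card T" unfolding n_def using distinct_card[OF cs(1)] cs(2)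
    card_Diff_subset[OF tc.finT tc.TE] by simp
  have TleE: "card T \<le> card E" using card_mono[OF tc.finE tc.TE] .
  note mm = matrix_main[OF A]
  show ?thesis
  proof (intro conjI)
    show "\<forall>k. eigenvalue K k \<longrightarrow> k \<ge> 1" using mm unfolding Keq by blast
    show "\<forall>k. eigenvalue sK k \<longrightarrow> k \<ge> 1" using mm unfolding sKeq by blast
    show "\<forall>k > 1. (eigenvalue K k \<longleftrightarrow> eigenvalue sK k) \<and> eig_mult K k = eig_mult sK k"
      using mm unfolding Keq sKeq by blast
    have "int (eig_mult K 1) - int (eig_mult sK 1) = int n - int m"
      using mm unfolding Keq sKeq by blast
    thus "int (eig_mult K 1) - int (eig_mult sK 1)
        = (int (card E) - int (card V) + 1) - (int (card V) - 1)"
      using mT nT cT V1 TleE by simp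
    show "card E = 2 * card V - 2 \<longrightarrow> char_poly K = char_poly sK \<and> similar_mat K sK"
    proof
      assume "card E = 2 * card V - 2"
      hence "n = m" using mT nT cT V1 by simp
      thus "char_poly K = char_poly sK \<and> similar_mat K sK" using mm unfolding Keq sKeq by blast
    qed
  qed
qed


end
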